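(* Let $R$ be a Dedekind domain and $G\in R^{n\times n}$ with $GG^{T}=\ell^2\mathbf{1}$ for some nonzero $\ell\in R$, where $\mathbf{1}$ is the identity matrix. Let $\mathfrak{d}_1,\ldots,\mathfrak{d}_n$ be the Smith ideals of $G$. Then $\mathfrak{d}_i\mathfrak{d}_{n-i+1}=\ell^2R$ for every $i\leq n/2$.
   Context: The $i$th determinantal ideal $\mathfrak{D}_i\subseteq R$ of $G$ is the ideal generated by all $i\times i$ minors. The Smith ideals are defined by $\mathfrak{d}_1=\mathfrak{D}_1$ and, for $i>1$, $\mathfrak{d}_i$ is the unique ideal with $\mathfrak{d}_i\mathfrak{D}_{i-1}=\mathfrak{D}_i$ if $\mathfrak{D}_{i-1}\neq0$, and $\mathfrak{d}_i=0$ otherwise. *)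

theory Defs
  imports "HOL-Computational_Algebra.Polynomial" "HOL-Computational_Algebra.Fraction_Field"
          "Jordan_Normal_Form.Determinant" "Jordan_Normal_Form.DL_Submatrix"
begin

definition is_ideal :: "'a::comm_ring_1 set \<Rightarrow> bool" where
  "is_ideal I \<longleftrightarrow> 0 \<in> I \<and> (\<forall>x\<in>I. \<forall>y\<in>I. x + y \<in> I) \<and> (\<forall>r. \<forall>x\<in>I. r * x \<in> I)"

definition ideal_gen :: "'a::comm_ring_1 set \<Rightarrow> 'a set" where
  "ideal_gen S = {x. \<exists>F c. finite F \<and> F \<subseteq> S \<and> x = (\<Sum>s\<in>F. c s * s)}"

definition ideal_mult :: "'a::comm_ring_1 set \<Rightarrow> 'a set \<Rightarrow> 'a set" where
  "ideal_mult I J = ideal_gen {a * b | a b. a \<in> I \<and> b \<in> J}"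

definition principal_ideal :: "'a::comm_ring_1 \<Rightarrow> 'a set" where
  "principal_ideal a = {a * r | r. True}"

definition prime_ideal :: "'a::comm_ring_1 set \<Rightarrow> bool" where
  "prime_ideal P \<longleftrightarrow> is_ideal P \<and> P \<noteq> UNIV \<and> (\<forall>a b. a * b \<in> P \<longrightarrow> a \<in> P \<or> b \<in> P)"

definition maximal_ideal :: "'a::comm_ring_1 set \<Rightarrow> bool" where
  "maximal_ideal M \<longleftrightarrow> is_ideal M \<and> M \<noteq> UNIV \<and>
     (\<forall>J. is_ideal J \<and> M \<subseteq> J \<longrightarrow> J = M \<or> J = UNIV)"

definition noetherian_ring :: "'a::comm_ring_1 itself \<Rightarrow> bool" where
  "noetherian_ring _ \<longleftrightarrow> (\<forall>I::'a set. is_ideal I \<longrightarrow> (\<exists>S. finite S \<and> I = ideal_gen S))"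

definition integrally_closed :: "'a::idom itself \<Rightarrow> bool" where
  "integrally_closed _ \<longleftrightarrow>
     (\<forall>(x::'a fract) (p::'a poly). lead_coeff p = 1 \<and> poly (map_poly (\<lambda>a. Fract a 1) p) x = 0
        \<longrightarrow> (\<exists>a. x = Fract a 1))"

definition dim_le_one :: "'a::comm_ring_1 itself \<Rightarrow> bool" where
  "dim_le_one _ \<longleftrightarrow> (\<forall>P::'a set. prime_ideal P \<and> P \<noteq> {0} \<longrightarrow> maximal_ideal P)"

definition dedekind_domain :: "'a::idom itself \<Rightarrow> bool" where
  "dedekind_domain T \<longleftrightarrow> noetherian_ring T \<and> integrally_closed T \<and> dim_le_one T"

definition det_ideal :: "'a::comm_ring_1 mat \<Rightarrow> nat \<Rightarrow> 'a set" where
  "det_ideal G i = ideal_gen {det (submatrix G I J) | I J.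
      I \<subseteq> {..<dim_row G} \<and> J \<subseteq> {..<dim_col G} \<and> card I = i \<and> card J = i}"

definition smith_ideal :: "'a::comm_ring_1 mat \<Rightarrow> nat \<Rightarrow> 'a set" where
  "smith_ideal G i =
     (if i = 1 then det_ideal G 1
      else if det_ideal G (i - 1) \<noteq> {0}
        then (THE d. is_ideal d \<and> ideal_mult d (det_ideal G (i - 1)) = det_ideal G i)
      else {0})"

end

theory Submission
  imports Defs "Jordan_Normal_Form.Char_Poly"
begin

lemma ideal_sum: assumes "is_ideal I" "finite F" "\<And>s. s \<in> F \<Longrightarrow> f s \<in> I" shows "sum f F \<in> I"
  using assms(2,3)
proof (induction F rule: finite_induct)
  case empty then show ?case using assms(1) by (simp add: is_ideal_def)
next
  case (insert x F) then show ?case using assms(1) by (simp add: is_ideal_def)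
qed

lemma ideal_mul: "is_ideal I \<Longrightarrow> x \<in> I \<Longrightarrow> r * x \<in> I"
  by (simp add: is_ideal_def)
lemma ideal_mul2: "is_ideal I \<Longrightarrow> x \<in> I \<Longrightarrow> x * r \<in> I"
  by (metis ideal_mul mult.commute)
lemma ideal_add: "is_ideal I \<Longrightarrow> x \<in> I \<Longrightarrow> y \<in> I \<Longrightarrow> x + y \<in> I"
  by (simp add: is_ideal_def)
lemma ideal_zero: "is_ideal I \<Longrightarrow> 0 \<in> I"
  by (simp add: is_ideal_def)
lemma ideal_uminus: "is_ideal I \<Longrightarrow> x \<in> I \<Longrightarrow> - x \<in> I"
  by (metis ideal_mul mult_minus1)
lemma ideal_diff: "is_ideal I \<Longrightarrow> x \<in> I \<Longrightarrow> y \<in> I \<Longrightarrow> x - y \<in> I"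
  by (metis diff_conv_add_uminus ideal_add ideal_uminus)

lemma ideal_gen_least: assumes "is_ideal I" "S \<subseteq> I" shows "ideal_gen S \<subseteq> I"
proof
  fix x assume "x \<in> ideal_gen S"
  then obtain F c where "finite F" "F \<subseteq> S" "x = (\<Sum>s\<in>F. c s * s)" unfolding ideal_gen_def by auto
  then show "x \<in> I" using assms by (auto intro!: ideal_sum ideal_mul)
qed

lemma ideal_gen_sub: "S \<subseteq> ideal_gen (S::'a::comm_ring_1 set)"
proof
  fix x assume "x \<in> S"
  then show "x \<in> ideal_gen S" unfolding ideal_gen_def
    by (intro CollectI exI[of _ "{x}"] exI[of _ "\<lambda>_. 1"]) auto
qed

lemma ideal_gen_ideal: "is_ideal (ideal_gen (S::'a::comm_ring_1 set))"
  unfolding is_ideal_def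
proof (intro conjI ballI allI)
  show "0 \<in> ideal_gen S" unfolding ideal_gen_def by (intro CollectI exI[of _ "{}"]) auto
next
  fix x y assume "x \<in> ideal_gen S" "y \<in> ideal_gen S"
  then obtain F c G d where F: "finite F" "F \<subseteq> S" "x = (\<Sum>s\<in>F. c s * s)"
    and G: "finite G" "G \<subseteq> S" "y = (\<Sum>s\<in>G. d s * s)" unfolding ideal_gen_def by auto
  define e where "e s = (if s \<in> F then c s else 0) + (if s \<in> G then d s else 0)" for s
  have "(\<Sum>s\<in>F. c s * s) = (\<Sum>s\<in>F\<union>G. (if s \<in> F then c s else 0) * s)"
    using F(1) G(1) by (intro sum.mono_neutral_cong_left) auto
  moreover have "(\<Sum>s\<in>G. d s * s) = (\<Sum>s\<in>F\<union>G. (if s \<in> G then d s else 0) * s)"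
    using F(1) G(1) by (intro sum.mono_neutral_cong_left) auto
  ultimately have eq: "x + y = (\<Sum>s\<in>F\<union>G. e s * s)"
    unfolding F(3) G(3) by (simp add: e_def sum.distrib distrib_right)
  have fin: "finite (F \<union> G)" and sub: "F \<union> G \<subseteq> S" using F G by auto
  show "x + y \<in> ideal_gen S" unfolding ideal_gen_def
    by (intro CollectI exI[of _ "F \<union> G"] exI[of _ e] conjI fin sub eq)
next
  fix r x assume "x \<in> ideal_gen S"
  then obtain F c where F: "finite F" "F \<subseteq> S" "x = (\<Sum>s\<in>F. c s * s)" unfolding ideal_gen_def by auto
  then have "r * x = (\<Sum>s\<in>F. (r * c s) * s)" by (simp add: sum_distrib_left mult.assoc)
  then show "r * x \<in> ideal_gen S" unfolding ideal_gen_def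
    by (intro CollectI exI[of _ F] exI[of _ "\<lambda>s. r * c s"] conjI F(1) F(2))
qed

lemma ideal_gen_mono: "S \<subseteq> T \<Longrightarrow> ideal_gen S \<subseteq> ideal_gen (T::'a::comm_ring_1 set)"
  by (rule ideal_gen_least[OF ideal_gen_ideal]) (use ideal_gen_sub[of T] in blast)

lemma ideal_gen_idem: "is_ideal I \<Longrightarrow> ideal_gen I = I"
  by (rule subset_antisym[OF ideal_gen_least ideal_gen_sub]) auto

lemma ideal_mult_ideal: "is_ideal (ideal_mult I J)"
  unfolding ideal_mult_def by (rule ideal_gen_ideal)

lemma prodset_comm: "{a * b | a b. a \<in> I \<and> b \<in> J} \<subseteq> {a * b | a b. a \<in> J \<and> (b::'a::comm_ring_1) \<in> I}"
proof
  fix x assume "x \<in> {a * b | a b. a \<in> I \<and> b \<in> J}"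
  then obtain a b where "a \<in> I" "b \<in> J" "x = a * b" by blast
  then have "x = b * a \<and> b \<in> J \<and> a \<in> I" by (simp add: mult.commute)
  then show "x \<in> {a * b | a b. a \<in> J \<and> b \<in> I}" by blast
qed

lemma ideal_mult_comm: "ideal_mult I J = ideal_mult J I"
proof -
  have "{a * b | a b. a \<in> I \<and> b \<in> J} = {a * b | a b. a \<in> J \<and> b \<in> I}"
    by (rule subset_antisym[OF prodset_comm prodset_comm])
  then show ?thesis unfolding ideal_mult_def by simp
qed

lemma ideal_mult_in: assumes "a \<in> I" "b \<in> J" shows "a * b \<in> ideal_mult I J"
proof -
  have "a * b \<in> {a * b | a b. a \<in> I \<and> b \<in> J}"
    by (intro CollectI exI conjI) (rule refl, rule assms(1), rule assms(2))
  then show ?thesis unfolding ideal_mult_def by (rule subsetD[OF ideal_gen_sub])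
qed

lemma ideal_mult_least: assumes "is_ideal K" "\<And>a b. a \<in> I \<Longrightarrow> b \<in> J \<Longrightarrow> a * b \<in> K"
  shows "ideal_mult I J \<subseteq> K"
  unfolding ideal_mult_def
proof (rule ideal_gen_least[OF assms(1)])
  show "{a * b |a b. a \<in> I \<and> b \<in> J} \<subseteq> K"
  proof
    fix x assume "x \<in> {a * b | a b. a \<in> I \<and> b \<in> J}"
    then obtain a b where "a \<in> I" "b \<in> J" "x = a * b" by blast
    then show "x \<in> K" using assms(2) by simp
  qed
qed

lemma ideal_mult_mono: assumes "I \<subseteq> I'" "J \<subseteq> J'" shows "ideal_mult I J \<subseteq> ideal_mult I' J'"
proof (rule ideal_mult_least[OF ideal_mult_ideal])
  fix a b assume "a \<in> I" "b \<in> J"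
  then show "a * b \<in> ideal_mult I' J'" using assms by (intro ideal_mult_in; blast)
qed

lemma ideal_mult_le: "is_ideal I \<Longrightarrow> ideal_mult I J \<subseteq> I"
  by (rule ideal_mult_least) (auto intro: ideal_mul2)

lemma ideal_mult_le2: "is_ideal J \<Longrightarrow> ideal_mult I J \<subseteq> J"
  unfolding ideal_mult_comm[of I J] by (rule ideal_mult_le)

lemma colon_ideal: assumes "is_ideal K" shows "is_ideal {x. \<forall>c\<in>J. x * c \<in> K}"
  unfolding is_ideal_def
proof (intro conjI ballI allI)
  show "0 \<in> {x. \<forall>c\<in>J. x * c \<in> K}" using ideal_zero[OF assms] by simp
next
  fix x y assume "x \<in> {x. \<forall>c\<in>J. x * c \<in> K}" "y \<in> {x. \<forall>c\<in>J. x * c \<in> K}"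
  then show "x + y \<in> {x. \<forall>c\<in>J. x * c \<in> K}" using ideal_add[OF assms] by (simp add: distrib_right)
next
  fix r x assume "x \<in> {x. \<forall>c\<in>J. x * c \<in> K}"
  then show "r * x \<in> {x. \<forall>c\<in>J. x * c \<in> K}" using ideal_mul[OF assms] by (simp add: mult.assoc)
qed

lemma ideal_mult_assoc1: "ideal_mult (ideal_mult I J) K \<subseteq> ideal_mult I (ideal_mult J K)"
proof (rule ideal_mult_least[OF ideal_mult_ideal])
  fix x c assume x: "x \<in> ideal_mult I J" and c: "c \<in> K"
  have "ideal_mult I J \<subseteq> {x. \<forall>c\<in>K. x * c \<in> ideal_mult I (ideal_mult J K)}"
  proof (rule ideal_mult_least[OF colon_ideal[OF ideal_mult_ideal]])
    fix a b assume ab: "a \<in> I" "b \<in> J"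
    show "a * b \<in> {x. \<forall>c\<in>K. x * c \<in> ideal_mult I (ideal_mult J K)}"
    proof (intro CollectI ballI)
      fix c assume "c \<in> K"
      then have "a * (b * c) \<in> ideal_mult I (ideal_mult J K)" using ab by (intro ideal_mult_in)
      then show "a * b * c \<in> ideal_mult I (ideal_mult J K)" by (simp add: mult.assoc)
    qed
  qed
  then show "x * c \<in> ideal_mult I (ideal_mult J K)" using x c by blast
qed

lemma ideal_mult_assoc: "ideal_mult (ideal_mult I J) K = ideal_mult I (ideal_mult J K)"
proof
  show "ideal_mult (ideal_mult I J) K \<subseteq> ideal_mult I (ideal_mult J K)" by (rule ideal_mult_assoc1)
  have "ideal_mult I (ideal_mult J K) = ideal_mult (ideal_mult K J) I" by (simp add: ideal_mult_comm)
  also have "\<dots> \<subseteq> ideal_mult K (ideal_mult J I)" by (rule ideal_mult_assoc1)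
  also have "\<dots> = ideal_mult (ideal_mult I J) K" by (simp add: ideal_mult_comm)
  finally show "ideal_mult I (ideal_mult J K) \<subseteq> ideal_mult (ideal_mult I J) K" .
qed

lemma ideal_mult_left_comm: "ideal_mult I (ideal_mult J K) = ideal_mult J (ideal_mult I K)"
proof -
  have "ideal_mult I (ideal_mult J K) = ideal_mult (ideal_mult I J) K" by (rule ideal_mult_assoc[symmetric])
  also have "\<dots> = ideal_mult (ideal_mult J I) K" by (simp only: ideal_mult_comm[of I J])
  also have "\<dots> = ideal_mult J (ideal_mult I K)" by (rule ideal_mult_assoc)
  finally show ?thesis .
qed

definition scale :: "'a::comm_ring_1 \<Rightarrow> 'a set \<Rightarrow> 'a set" where
  "scale a I = {a * x | x. x \<in> I}"

lemma scale_mem: "x \<in> I \<Longrightarrow> a * x \<in> scale a I"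
  unfolding scale_def by (rule CollectI, rule exI[of _ x]) simp

lemma scale_memE: "y \<in> scale a I \<Longrightarrow> (\<And>x. x \<in> I \<Longrightarrow> y = a * x \<Longrightarrow> P) \<Longrightarrow> P"
  unfolding scale_def by blast

lemma principal_mem: "a * r \<in> principal_ideal a"
  unfolding principal_ideal_def by (rule CollectI, rule exI[of _ r]) simp

lemma principal_memE: "y \<in> principal_ideal a \<Longrightarrow> (\<And>r. y = a * r \<Longrightarrow> P) \<Longrightarrow> P"
  unfolding principal_ideal_def by blast

lemma principal_self: "a \<in> principal_ideal a"
  using principal_mem[of a 1] by simp

lemma principal_ideal_ideal: "is_ideal (principal_ideal a)"
  unfolding is_ideal_def
proof (intro conjI ballI allI)
  show "0 \<in> principal_ideal a" using principal_mem[of a 0] by simp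
next
  fix x y assume "x \<in> principal_ideal a" "y \<in> principal_ideal a"
  then obtain r s where "x = a * r" "y = a * s" by (auto elim!: principal_memE)
  then show "x + y \<in> principal_ideal a" using principal_mem[of a "r + s"] by (simp add: distrib_left)
next
  fix t x assume "x \<in> principal_ideal a"
  then obtain r where "x = a * r" by (auto elim!: principal_memE)
  then show "t * x \<in> principal_ideal a" using principal_mem[of a "t * r"] by (simp add: mult.left_commute)
qed

lemma scale_ideal: assumes "is_ideal I" shows "is_ideal (scale a I)"
  unfolding is_ideal_def
proof (intro conjI ballI allI)
  show "0 \<in> scale a I" using scale_mem[OF ideal_zero[OF assms], where a=a] by simp
next
  fix x y assume "x \<in> scale a I" "y \<in> scale a I"
  then obtain r s where "x = a * r" "y = a * s" "r \<in> I" "s \<in> I" by (auto elim!: scale_memE)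
  moreover have "r + s \<in> I" using ideal_add[OF assms] \<open>r \<in> I\<close> \<open>s \<in> I\<close> by blast
  ultimately show "x + y \<in> scale a I" using scale_mem[of "r + s" I a] by (simp add: distrib_left)
next
  fix t x assume "x \<in> scale a I"
  then obtain r where "x = a * r" "r \<in> I" by (auto elim!: scale_memE)
  moreover have "t * r \<in> I" using ideal_mul[OF assms] \<open>r \<in> I\<close> by blast
  ultimately show "t * x \<in> scale a I" using scale_mem[of "t * r" I a] by (simp add: mult.left_commute)
qed

lemma ideal_mult_principal: assumes "is_ideal I" shows "ideal_mult (principal_ideal a) I = scale a I"
proof
  show "ideal_mult (principal_ideal a) I \<subseteq> scale a I"
  proof (rule ideal_mult_least[OF scale_ideal[OF assms]])
    fix p x assume "p \<in> principal_ideal a" "x \<in> I"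
    then obtain r where "p = a * r" by (auto elim!: principal_memE)
    moreover have "r * x \<in> I" using ideal_mul[OF assms \<open>x \<in> I\<close>] by blast
    ultimately show "p * x \<in> scale a I" using scale_mem[of "r * x" I a] by (simp add: mult.assoc)
  qed
  show "scale a I \<subseteq> ideal_mult (principal_ideal a) I"
  proof
    fix y assume "y \<in> scale a I"
    then obtain x where "x \<in> I" "y = a * x" by (auto elim!: scale_memE)
    then show "y \<in> ideal_mult (principal_ideal a) I" using ideal_mult_in[OF principal_self] by simp
  qed
qed

lemma principal_one: "principal_ideal 1 = UNIV"
  using principal_mem[of 1] by auto

lemma scale_one: "scale 1 I = I"
  using scale_mem[of _ I 1] by (auto elim!: scale_memE)

lemma ideal_mult_UNIV: "is_ideal I \<Longrightarrow> ideal_mult UNIV I = I"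
  by (metis ideal_mult_principal principal_one scale_one)

lemma scale_scale: "scale a (scale b I) = scale (a * b) I"
proof
  show "scale a (scale b I) \<subseteq> scale (a * b) I"
    by (auto elim!: scale_memE simp: mult.assoc[symmetric] intro: scale_mem)
  show "scale (a * b) I \<subseteq> scale a (scale b I)"
    by (auto elim!: scale_memE simp: mult.assoc intro!: scale_mem)
qed

lemma scale_principal: "scale a (principal_ideal b) = principal_ideal (a * b)"
proof
  show "scale a (principal_ideal b) \<subseteq> principal_ideal (a * b)"
    by (auto elim!: scale_memE principal_memE simp: mult.assoc[symmetric] intro: principal_mem)
  show "principal_ideal (a * b) \<subseteq> scale a (principal_ideal b)"
    by (auto elim!: principal_memE simp: mult.assoc intro!: scale_mem principal_mem)
qed

lemma scale_cancel: fixes a :: "'a::idom" assumes "a \<noteq> 0" "scale a I = scale a J" shows "I = J"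
proof -
  have "x \<in> J" if "x \<in> I" "scale a I = scale a J" for x and I J :: "'a set"
  proof -
    have "a * x \<in> scale a J" using that scale_mem by metis
    then obtain y where "y \<in> J" "a * x = a * y" by (auto elim!: scale_memE)
    then show ?thesis using assms(1) by simp
  qed
  then show ?thesis using assms by blast
qed

lemma ideal_mult_scale: "is_ideal I \<Longrightarrow> is_ideal J \<Longrightarrow> ideal_mult (scale a I) J = scale a (ideal_mult I J)"
  by (metis ideal_mult_assoc ideal_mult_ideal ideal_mult_principal)

definition invertible_ideal :: "'a::comm_ring_1 set \<Rightarrow> bool" where
  "invertible_ideal I \<longleftrightarrow> (\<exists>J c. is_ideal J \<and> c \<noteq> 0 \<and> ideal_mult I J = principal_ideal c)"

lemma ideal_mult_swap: "ideal_mult (ideal_mult A I) J = ideal_mult (ideal_mult I J) A"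
proof -
  have "ideal_mult (ideal_mult A I) J = ideal_mult A (ideal_mult I J)" by (rule ideal_mult_assoc)
  also have "\<dots> = ideal_mult (ideal_mult I J) A" by (rule ideal_mult_comm)
  finally show ?thesis .
qed

lemma invertible_cancel:
  fixes I :: "'a::idom set"
  assumes "invertible_ideal I" "is_ideal A" "is_ideal B" "ideal_mult A I = ideal_mult B I"
  shows "A = B"
proof -
  obtain J c where J: "is_ideal J" "c \<noteq> 0" "ideal_mult I J = principal_ideal c"
    using assms(1) unfolding invertible_ideal_def by auto
  have "scale c A = ideal_mult (ideal_mult I J) A"
    unfolding J(3) ideal_mult_principal[OF assms(2)] ..
  also have "\<dots> = ideal_mult (ideal_mult A I) J" by (rule ideal_mult_swap[symmetric])
  also have "\<dots> = ideal_mult (ideal_mult B I) J" unfolding assms(4) ..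
  also have "\<dots> = ideal_mult (ideal_mult I J) B" by (rule ideal_mult_swap)
  also have "\<dots> = scale c B"
    unfolding J(3) ideal_mult_principal[OF assms(3)] ..
  finally show ?thesis using scale_cancel J(2) by blast
qed

lemma invertible_divide:
  fixes I :: "'a::idom set"
  assumes "invertible_ideal I" "is_ideal I" "is_ideal B" "B \<subseteq> I"
  shows "\<exists>d. is_ideal d \<and> ideal_mult d I = B"
proof -
  obtain J c where J: "is_ideal J" "c \<noteq> 0" "ideal_mult I J = principal_ideal c"
    using assms(1) unfolding invertible_ideal_def by auto
  define d where "d = {x. c * x \<in> ideal_mult B J}"
  have dI: "is_ideal d" unfolding is_ideal_def
  proof (intro conjI ballI allI)
    show "0 \<in> d" unfolding d_def using ideal_zero[OF ideal_mult_ideal] by simp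
  next
    fix x y assume "x \<in> d" "y \<in> d"
    then show "x + y \<in> d" unfolding d_def using ideal_add[OF ideal_mult_ideal] by (simp add: distrib_left)
  next
    fix r x assume "x \<in> d"
    then have "r * (c * x) \<in> ideal_mult B J" unfolding d_def using ideal_mul[OF ideal_mult_ideal] by simp
    then show "r * x \<in> d" unfolding d_def by (simp add: mult.left_commute)
  qed
  have BJ: "ideal_mult B J \<subseteq> principal_ideal c" using J(3) assms(4) ideal_mult_mono by blast
  have "scale c d = ideal_mult B J"
  proof
    show "scale c d \<subseteq> ideal_mult B J" unfolding d_def by (auto elim!: scale_memE)
    show "ideal_mult B J \<subseteq> scale c d"
    proof
      fix y assume y: "y \<in> ideal_mult B J"
      then obtain r where r: "y = c * r" using BJ by (auto elim!: principal_memE)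
      then have "r \<in> d" using y unfolding d_def by simp
      then show "y \<in> scale c d" using r scale_mem by metis
    qed
  qed
  then have "scale c (ideal_mult d I) = ideal_mult (ideal_mult B J) I"
    using ideal_mult_scale[OF dI assms(2), of c] by simp
  also have "\<dots> = ideal_mult (ideal_mult J I) B" by (rule ideal_mult_swap)
  also have "\<dots> = ideal_mult (ideal_mult I J) B" by (simp only: ideal_mult_comm[of J I])
  also have "\<dots> = scale c B" unfolding J(3) ideal_mult_principal[OF assms(3)] ..
  finally show ?thesis using scale_cancel[OF J(2)] dI by blast
qed

lemma invertible_UNIV: "invertible_ideal (UNIV :: 'a::comm_ring_1 set)"
  unfolding invertible_ideal_def
proof (intro exI conjI)
  show "is_ideal (UNIV :: 'a set)" unfolding is_ideal_def by simp
  show "(1::'a) \<noteq> 0" by simp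
  show "ideal_mult UNIV UNIV = principal_ideal (1::'a)"
    unfolding principal_one by (rule ideal_mult_UNIV) (simp add: is_ideal_def)
qed

lemma finite_in_chain:
  fixes ch :: "nat \<Rightarrow> 'b set"
  assumes mono: "\<And>m n. m \<le> n \<Longrightarrow> ch m \<subseteq> ch n" and "finite S" and "S \<subseteq> (\<Union>n. ch n)"
  shows "\<exists>N. S \<subseteq> ch N"
  using assms(2,3)
proof (induction S rule: finite_induct)
  case empty then show ?case by auto
next
  case (insert x F)
  then obtain N where N: "F \<subseteq> ch N" by auto
  from insert.prems obtain k where k: "x \<in> ch k" by auto
  have "F \<subseteq> ch (max N k)" using N mono[of N "max N k"] by auto
  moreover have "x \<in> ch (max N k)" using k mono[of k "max N k"] by auto
  ultimately show ?case by blast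
qed

lemma noeth_max:
  fixes \<Phi> :: "'a::comm_ring_1 set set"
  assumes noeth: "noetherian_ring TYPE('a)" and ne: "I0 \<in> \<Phi>" and ids: "\<And>I. I \<in> \<Phi> \<Longrightarrow> is_ideal I"
  shows "\<exists>M\<in>\<Phi>. \<forall>I\<in>\<Phi>. M \<subseteq> I \<longrightarrow> I = M"
proof (rule ccontr)
  assume nt: "\<not> ?thesis"
  have ex: "\<exists>I. M \<in> \<Phi> \<longrightarrow> I \<in> \<Phi> \<and> M \<subset> I" for M
  proof (cases "M \<in> \<Phi>")
    case True
    then obtain I where "I \<in> \<Phi>" "M \<subseteq> I" "I \<noteq> M" using nt True by blast
    then show ?thesis by blast
  qed simp
  have "\<forall>M. \<exists>I. M \<in> \<Phi> \<longrightarrow> I \<in> \<Phi> \<and> M \<subset> I" using ex by blast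
  from choice[OF this] obtain nxt where nxt: "\<And>M. M \<in> \<Phi> \<Longrightarrow> nxt M \<in> \<Phi> \<and> M \<subset> nxt M" by blast
  define ch where "ch n = (nxt ^^ n) I0" for n
  have chSuc: "ch (Suc n) = nxt (ch n)" for n by (simp add: ch_def)
  have chP: "ch n \<in> \<Phi>" for n
  proof (induction n)
    case 0 then show ?case by (simp add: ch_def ne)
  next
    case (Suc n) then show ?case unfolding chSuc using nxt by blast
  qed
  have chS: "ch n \<subset> ch (Suc n)" for n unfolding chSuc using nxt[OF chP[of n]] by blast
  have mono: "ch m \<subseteq> ch n" if "m \<le> n" for m n
    by (rule lift_Suc_mono_le[of ch, OF _ that]) (use chS in blast)
  define U where "U = (\<Union>n. ch n)"
  have "is_ideal U" unfolding is_ideal_def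
  proof (intro conjI ballI allI)
    show "0 \<in> U" unfolding U_def using ideal_zero[OF ids[OF chP[of 0]]] by blast
  next
    fix x y assume "x \<in> U" "y \<in> U"
    then obtain m k where "x \<in> ch m" "y \<in> ch k" unfolding U_def by blast
    then have "x \<in> ch (max m k)" "y \<in> ch (max m k)" using mono[of m "max m k"] mono[of k "max m k"] by auto
    then have "x + y \<in> ch (max m k)" using ideal_add[OF ids[OF chP]] by blast
    then show "x + y \<in> U" unfolding U_def by blast
  next
    fix r x assume "x \<in> U"
    then obtain m where "x \<in> ch m" unfolding U_def by blast
    then have "r * x \<in> ch m" using ideal_mul[OF ids[OF chP]] by blast
    then show "r * x \<in> U" unfolding U_def by blast
  qed
  then have "\<exists>S. finite S \<and> U = ideal_gen S" using noeth unfolding noetherian_ring_def by simp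
  then obtain S where S: "finite S" "U = ideal_gen S" by blast
  have "S \<subseteq> U" unfolding S(2) by (rule ideal_gen_sub)
  then have "S \<subseteq> (\<Union>n. ch n)" unfolding U_def .
  then obtain N where N: "S \<subseteq> ch N" using finite_in_chain[of ch, OF mono S(1)] by blast
  have "U \<subseteq> ch N" unfolding S(2) by (rule ideal_gen_least[OF ids[OF chP] N])
  moreover have "ch (Suc N) \<subseteq> U" unfolding U_def by (rule UN_upper) simp
  ultimately have c1: "ch (Suc N) \<subseteq> ch N" by (rule subset_trans[rotated])
  have c2: "ch N \<subseteq> ch (Suc N)" "ch N \<noteq> ch (Suc N)" using chS[of N] unfolding psubset_eq by simp_all
  show False using subset_antisym[OF c1 c2(1)] c2(2) by simp
qed

fun prodl :: "'a::comm_ring_1 set list \<Rightarrow> 'a set" where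
  "prodl [] = UNIV"
| "prodl (P # Ps) = ideal_mult P (prodl Ps)"

lemma UNIV_ideal: "is_ideal UNIV" unfolding is_ideal_def by simp

lemma prodl_ideal: "is_ideal (prodl Ps)"
  by (cases Ps) (auto simp: UNIV_ideal ideal_mult_ideal)

lemma prodl_append: "prodl (xs @ ys) = ideal_mult (prodl xs) (prodl ys)"
proof (induction xs)
  case Nil then show ?case by (simp add: ideal_mult_UNIV[OF prodl_ideal])
next
  case (Cons x xs) then show ?case by (simp add: ideal_mult_assoc)
qed

lemma prodl_remove: "prodl (xs @ Q # ys) = ideal_mult Q (prodl (xs @ ys))"
  by (simp add: prodl_append ideal_mult_left_comm)

lemma prime_prod: assumes "prime_ideal P" "ideal_mult I J \<subseteq> P" shows "I \<subseteq> P \<or> J \<subseteq> P"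
proof (rule ccontr)
  assume "\<not> ?thesis"
  then obtain a b where "a \<in> I" "a \<notin> P" "b \<in> J" "b \<notin> P" by blast
  then have "a * b \<in> P" using assms(2) ideal_mult_in by blast
  then show False using assms(1) \<open>a \<notin> P\<close> \<open>b \<notin> P\<close> unfolding prime_ideal_def by blast
qed

lemma prime_prodl: assumes "prime_ideal P" "prodl Ps \<subseteq> P" shows "\<exists>Q\<in>set Ps. Q \<subseteq> P"
  using assms(2)
proof (induction Ps)
  case Nil then show ?case using assms(1) unfolding prime_ideal_def by auto
next
  case (Cons Q Ps)
  then have "Q \<subseteq> P \<or> prodl Ps \<subseteq> P" using prime_prod[OF assms(1)] by simp
  then show ?case using Cons.IH by auto
qed

lemma ideal_gen_insert: "a \<in> ideal_gen (insert a M)" "M \<subseteq> ideal_gen (insert a M)"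
  using ideal_gen_sub[of "insert a M"] by auto

lemma prod_insert_le:
  assumes M: "is_ideal M" and ab: "a * b \<in> M"
  shows "ideal_mult (ideal_gen (insert a M)) (ideal_gen (insert b M)) \<subseteq> M"
proof (rule ideal_mult_least[OF M])
  fix x y assume x: "x \<in> ideal_gen (insert a M)" and y: "y \<in> ideal_gen (insert b M)"
  have Mb: "ideal_gen (insert b M) \<subseteq> {y. \<forall>c\<in>{a}. y * c \<in> M}"
  proof (rule ideal_gen_least[OF colon_ideal[OF M]])
    show "insert b M \<subseteq> {y. \<forall>c\<in>{a}. y * c \<in> M}" using ab M by (auto simp: mult.commute intro: ideal_mul2)
  qed
  have "ideal_gen (insert a M) \<subseteq> {x. \<forall>c\<in>ideal_gen (insert b M). x * c \<in> M}"
  proof (rule ideal_gen_least[OF colon_ideal[OF M]])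
    show "insert a M \<subseteq> {x. \<forall>c\<in>ideal_gen (insert b M). x * c \<in> M}"
      using Mb M by (auto simp: mult.commute intro: ideal_mul2)
  qed
  then show "x * y \<in> M" using x y by blast
qed

definition nzprimes :: "'a::comm_ring_1 set list \<Rightarrow> bool" where
  "nzprimes Ps \<longleftrightarrow> (\<forall>P\<in>set Ps. prime_ideal P \<and> P \<noteq> {0})"

lemma contains_prime_product:
  fixes I :: "'a::comm_ring_1 set"
  assumes noeth: "noetherian_ring TYPE('a)" and I: "is_ideal I" "I \<noteq> {0}"
  shows "\<exists>Ps. nzprimes Ps \<and> prodl Ps \<subseteq> I"
proof (rule ccontr)
  assume nI: "\<not> ?thesis"
  define \<Phi> :: "'a set set" where "\<Phi> = {I. is_ideal I \<and> I \<noteq> {0} \<and> \<not> (\<exists>Ps. nzprimes Ps \<and> prodl Ps \<subseteq> I)}"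
  have "I \<in> \<Phi>" using I nI unfolding \<Phi>_def by simp
  moreover have "\<And>J. J \<in> \<Phi> \<Longrightarrow> is_ideal J" unfolding \<Phi>_def by simp
  ultimately obtain M where M\<Phi>: "M \<in> \<Phi>" and Mmax: "\<forall>J\<in>\<Phi>. M \<subseteq> J \<longrightarrow> J = M"
    using noeth_max[OF noeth] by metis
  have M: "is_ideal M" "M \<noteq> {0}" and Mn: "\<And>Ps. nzprimes Ps \<Longrightarrow> \<not> prodl Ps \<subseteq> M"
    using M\<Phi> unfolding \<Phi>_def by auto
  have "M \<noteq> UNIV" using Mn[of "[]"] by (auto simp: nzprimes_def)
  moreover have "\<not> prime_ideal M"
  proof
    assume "prime_ideal M"
    then have "nzprimes [M]" using M by (simp add: nzprimes_def)
    moreover have "prodl [M] \<subseteq> M" by (simp add: ideal_mult_le[OF M(1)])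
    ultimately show False using Mn by blast
  qed
  ultimately have "\<not> (\<forall>a b. a * b \<in> M \<longrightarrow> a \<in> M \<or> b \<in> M)"
    using M(1) unfolding prime_ideal_def by simp
  then obtain a b where ab: "a * b \<in> M" "a \<notin> M" "b \<notin> M" by blast
  have big: "\<exists>Ps. nzprimes Ps \<and> prodl Ps \<subseteq> ideal_gen (insert c M)" if "c \<notin> M" for c
  proof (rule ccontr)
    assume nc: "\<not> ?thesis"
    obtain z where z: "z \<in> M" "z \<noteq> 0" using M(2) ideal_zero[OF M(1)] by blast
    have "z \<in> ideal_gen (insert c M)" using ideal_gen_insert(2)[of M c] z(1) by (rule subsetD)
    then have "ideal_gen (insert c M) \<noteq> {0}" using \<open>z \<noteq> 0\<close> by (metis singletonD)
    then have "ideal_gen (insert c M) \<in> \<Phi>" unfolding \<Phi>_def using ideal_gen_ideal nc by simp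
    then have "ideal_gen (insert c M) = M" using Mmax ideal_gen_insert(2)[of M c] by simp
    then show False using ideal_gen_insert(1)[of c M] that by simp
  qed
  obtain Pa where Pa: "nzprimes Pa" "prodl Pa \<subseteq> ideal_gen (insert a M)" using big ab(2) by blast
  obtain Pb where Pb: "nzprimes Pb" "prodl Pb \<subseteq> ideal_gen (insert b M)" using big ab(3) by blast
  have "nzprimes (Pa @ Pb)" using Pa Pb by (auto simp: nzprimes_def)
  moreover have "prodl (Pa @ Pb) \<subseteq> M"
    unfolding prodl_append using ideal_mult_mono[OF Pa(2) Pb(2)] prod_insert_le[OF M(1) ab(1)] by (rule subset_trans)
  ultimately show False using Mn by blast
qed

lemma nth_image: "(!) ss ` {0..<length ss} = set ss"
  by (auto simp: in_set_conv_nth)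

lemma ideal_gen_list_coeffs:
  fixes ss :: "'a::comm_ring_1 list"
  assumes d: "distinct ss" and y: "y \<in> ideal_gen (set ss)"
  shows "\<exists>c. y = (\<Sum>j\<in>{0..<length ss}. c j * ss ! j)"
proof -
  obtain F c0 where F: "finite F" "F \<subseteq> set ss" "y = (\<Sum>s\<in>F. c0 s * s)"
    using y unfolding ideal_gen_def by blast
  define c where "c j = (if ss ! j \<in> F then c0 (ss ! j) else 0)" for j
  have "(\<Sum>j\<in>{0..<length ss}. c j * ss ! j) = (\<Sum>s\<in>(!) ss ` {0..<length ss}. (if s \<in> F then c0 s else 0) * s)"
    by (subst sum.reindex) (auto simp: c_def intro!: inj_on_nth d)
  also have "\<dots> = (\<Sum>s\<in>set ss. (if s \<in> F then c0 s else 0) * s)" by (simp only: nth_image)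
  also have "\<dots> = (\<Sum>s\<in>F. c0 s * s)"
    by (rule sum.mono_neutral_cong_right) (use F(2) in auto)
  finally show ?thesis using F(3) by metis
qed

lemma int_lemma:
  fixes x a :: "'a::idom"
  assumes IC: "integrally_closed TYPE('a)" and a: "a \<noteq> 0" and S: "finite S" and nz: "s0 \<in> S" "s0 \<noteq> 0"
    and xS: "\<And>s. s \<in> S \<Longrightarrow> x * s \<in> scale a (ideal_gen S)"
  shows "x \<in> principal_ideal a"
proof -
  obtain ss where ss: "set ss = S" "distinct ss" using finite_distinct_list[OF S] by blast
  define m where "m = length ss"
  have "\<exists>c. i < m \<longrightarrow> x * ss ! i = a * (\<Sum>j\<in>{0..<m}. c j * ss ! j)" for i
  proof (cases "i < m")
    case True
    then have "ss ! i \<in> S" using ss(1) m_def by auto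
    then have "x * ss ! i \<in> scale a (ideal_gen S)" by (rule xS)
    then obtain y where y: "y \<in> ideal_gen (set ss)" "x * ss ! i = a * y" using ss(1) by (auto elim!: scale_memE)
    obtain c where "y = (\<Sum>j\<in>{0..<m}. c j * ss ! j)" using ideal_gen_list_coeffs[OF ss(2) y(1)] m_def by blast
    then show ?thesis using y(2) by blast
  qed simp
  then have "\<forall>i. \<exists>c. i < m \<longrightarrow> x * ss ! i = a * (\<Sum>j\<in>{0..<m}. c j * ss ! j)" by blast
  from choice[OF this] obtain C where C: "\<And>i. i < m \<Longrightarrow> x * ss ! i = a * (\<Sum>j\<in>{0..<m}. C i j * ss ! j)"
    by blast
  interpret h: inj_comm_ring_hom to_fract by (unfold_locales, auto)
  define Cm where "Cm = mat m m (\<lambda>(i,j). C i j)"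
  have Cm: "Cm \<in> carrier_mat m m" unfolding Cm_def by simp
  define Cf where "Cf = map_mat to_fract Cm"
  have Cf: "Cf \<in> carrier_mat m m" unfolding Cf_def using Cm by simp
  define x' where "x' = Fract x a"
  define NN where "NN = - char_matrix Cf x'"
  have NN: "NN \<in> carrier_mat m m" unfolding NN_def char_matrix_def using Cf by auto
  have Nij: "NN $$ (i,j) = (if i = j then x' else 0) - to_fract (C i j)" if "i < m" "j < m" for i j
    using that Cf unfolding NN_def char_matrix_def Cf_def Cm_def by auto
  define v where "v = vec m (\<lambda>j. to_fract (ss ! j))"
  have v: "v \<in> carrier_vec m" unfolding v_def by simp
  obtain j0 where j0: "j0 < m" "ss ! j0 = s0" using nz(1) ss(1) m_def by (auto simp: in_set_conv_nth)
  have v0: "v \<noteq> 0\<^sub>v m"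
  proof
    assume "v = 0\<^sub>v m"
    then have "v $ j0 = 0" using j0 by simp
    then show False using j0 nz(2) unfolding v_def by simp
  qed
  have key: "x' * to_fract (ss ! i) = to_fract (\<Sum>j\<in>{0..<m}. C i j * ss ! j)" if "i < m" for i
  proof -
    have "x' * to_fract (ss ! i) = Fract (x * ss ! i) a" unfolding x'_def to_fract_def by simp
    also have "\<dots> = Fract (a * (\<Sum>j\<in>{0..<m}. C i j * ss ! j)) a" using C[OF that] by simp
    also have "\<dots> = to_fract (\<Sum>j\<in>{0..<m}. C i j * ss ! j)" unfolding to_fract_def using a
      by (simp add: eq_fract)
    finally show ?thesis .
  qed
  have Nv: "NN *\<^sub>v v = 0\<^sub>v m"
  proof (rule eq_vecI)
    show "dim_vec (NN *\<^sub>v v) = dim_vec (0\<^sub>v m)" using NN by simp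
    fix i assume "i < dim_vec (0\<^sub>v m)"
    then have i: "i < m" by simp
    have "(NN *\<^sub>v v) $ i = (\<Sum>j\<in>{0..<m}. NN $$ (i,j) * v $ j)"
      using NN v i by (simp add: scalar_prod_def)
    also have "\<dots> = (\<Sum>j\<in>{0..<m}. (if i = j then x' * to_fract (ss ! j) else 0) - to_fract (C i j * ss ! j))"
      by (rule sum.cong) (auto simp: Nij i v_def left_diff_distrib)
    also have "\<dots> = x' * to_fract (ss ! i) - to_fract (\<Sum>j\<in>{0..<m}. C i j * ss ! j)"
      using i by (simp add: sum_subtractf h.hom_sum)
    also have "\<dots> = 0" using key[OF i] by simp
    finally show "(NN *\<^sub>v v) $ i = 0\<^sub>v m $ i" using i by simp
  qed
  have "det NN = 0" using det_0_iff_vec_prod_zero[OF NN] v v0 Nv by blast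
  then have "poly (char_poly Cf) x' = 0" using char_poly_matrix[OF Cf] unfolding NN_def by simp
  then have p0: "poly (map_poly to_fract (char_poly Cm)) x' = 0" unfolding Cf_def h.char_poly_hom[OF Cm] .
  have lc: "lead_coeff (char_poly Cm) = 1" using degree_monic_char_poly[OF Cm] by simp
  have tf: "(\<lambda>a. Fract a 1) = to_fract" by (simp add: to_fract_def fun_eq_iff)
  obtain r where "x' = Fract r 1" using IC lc p0 unfolding integrally_closed_def tf by blast
  then have "x * 1 = r * a" unfolding x'_def using a by (simp add: eq_fract)
  then have "x = a * r" by (simp add: mult.commute)
  then show ?thesis using principal_mem by metis
qed

lemma maximal_eq: assumes "maximal_ideal Q" "is_ideal P" "Q \<subseteq> P" "P \<noteq> UNIV" shows "P = Q"
  using assms unfolding maximal_ideal_def by blast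

lemma step2:
  fixes P :: "'a::idom set"
  assumes noeth: "noetherian_ring TYPE('a)" and dim: "dim_le_one TYPE('a)"
    and P: "maximal_ideal P" and aP: "a \<in> P" and a0: "a \<noteq> 0"
  shows "\<exists>b. b \<notin> principal_ideal a \<and> (\<forall>p\<in>P. b * p \<in> principal_ideal a)"
proof -
  have Pi: "is_ideal P" "P \<noteq> UNIV" using P unfolding maximal_ideal_def by auto
  have aI: "is_ideal (principal_ideal a)" by (rule principal_ideal_ideal)
  have "principal_ideal a \<noteq> {0}" using principal_self[of a] a0 by auto
  then obtain Ps0 where Ps0: "nzprimes Ps0 \<and> prodl Ps0 \<subseteq> principal_ideal a"
    using contains_prime_product[OF noeth aI] by blast
  obtain Ps where Ps: "nzprimes Ps \<and> prodl Ps \<subseteq> principal_ideal a"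
    and Psmin: "\<And>Qs. nzprimes Qs \<and> prodl Qs \<subseteq> principal_ideal a \<Longrightarrow> length Ps \<le> length Qs"
    using ex_has_least_nat[of "\<lambda>Qs. nzprimes Qs \<and> prodl Qs \<subseteq> principal_ideal a" Ps0 length] Ps0 by blast
  have aPsub: "principal_ideal a \<subseteq> P"
    using ideal_mul2[OF Pi(1) aP] by (auto elim!: principal_memE)
  have "prodl Ps \<subseteq> P" using Ps aPsub by blast
  moreover have Pprime: "prime_ideal P"
    unfolding prime_ideal_def
  proof (intro conjI allI impI Pi)
    fix x y assume xy: "x * y \<in> P"
    show "x \<in> P \<or> y \<in> P"
    proof (rule ccontr)
      assume "\<not> ?thesis"
      then have nx: "x \<notin> P" and ny: "y \<notin> P" by auto
      have "ideal_gen (insert x P) = UNIV"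
        using maximal_eq[OF P ideal_gen_ideal ideal_gen_insert(2)] ideal_gen_insert(1)[of x P] nx by blast
      then have "1 \<in> ideal_gen (insert x P)" by simp
      have yy: "ideal_gen (insert x P) \<subseteq> {z. \<forall>c\<in>{y}. z * c \<in> P}"
      proof (rule ideal_gen_least[OF colon_ideal[OF Pi(1)]])
        show "insert x P \<subseteq> {z. \<forall>c\<in>{y}. z * c \<in> P}" using xy Pi(1) by (auto intro: ideal_mul2)
      qed
      then have "1 * y \<in> P" using \<open>1 \<in> ideal_gen (insert x P)\<close> by blast
      then show False using ny by simp
    qed
  qed
  ultimately obtain Q where Q: "Q \<in> set Ps" "Q \<subseteq> P" using prime_prodl by blast
  have Qnz: "prime_ideal Q" "Q \<noteq> {0}" using Ps Q(1) unfolding nzprimes_def by auto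
  then have "maximal_ideal Q" using dim unfolding dim_le_one_def by blast
  then have QP: "Q = P" using maximal_eq[OF _ Pi(1) Q(2) Pi(2)] by simp
  obtain xs ys where Psxs: "Ps = xs @ Q # ys" using split_list[OF Q(1)] by blast
  have "nzprimes (xs @ ys)" using Ps unfolding Psxs nzprimes_def by auto
  moreover have "length (xs @ ys) < length Ps" unfolding Psxs by simp
  ultimately have "\<not> prodl (xs @ ys) \<subseteq> principal_ideal a" using Psmin by fastforce
  then obtain b where b: "b \<in> prodl (xs @ ys)" "b \<notin> principal_ideal a" by blast
  have "b * p \<in> principal_ideal a" if "p \<in> P" for p
  proof -
    have "p * b \<in> ideal_mult Q (prodl (xs @ ys))" using that QP b(1) by (simp add: ideal_mult_in)
    then have "p * b \<in> prodl Ps" unfolding Psxs prodl_remove .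
    then show ?thesis using Ps by (auto simp: mult.commute)
  qed
  then show ?thesis using b(2) by blast
qed

lemma fg_nonzero:
  assumes "I = ideal_gen S" "I \<noteq> {0}" shows "\<exists>s0\<in>S. s0 \<noteq> 0"
proof (rule ccontr)
  assume "\<not> ?thesis"
  then have "S \<subseteq> {0}" by auto
  moreover have "is_ideal ({0} :: 'a set)" unfolding is_ideal_def by simp
  ultimately have "I \<subseteq> {0}" using assms(1) ideal_gen_least by blast
  moreover have "0 \<in> I" using assms(1) ideal_zero[OF ideal_gen_ideal] by simp
  ultimately show False using assms(2) by blast
qed

lemma int_lemma_ideal:
  fixes M :: "'a::idom set"
  assumes noeth: "noetherian_ring TYPE('a)" and IC: "integrally_closed TYPE('a)"
    and M: "is_ideal M" "M \<noteq> {0}" and a0: "a \<noteq> 0"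
    and bM: "\<And>m. m \<in> M \<Longrightarrow> b * m \<in> scale a M"
  shows "b \<in> principal_ideal a"
proof -
  obtain S where S: "finite S" "M = ideal_gen S" using noeth M(1) unfolding noetherian_ring_def by blast
  obtain s0 where s0: "s0 \<in> S" "s0 \<noteq> 0" using fg_nonzero[OF S(2) M(2)] by blast
  show ?thesis
  proof (rule int_lemma[OF IC a0 S(1) s0])
    fix s assume "s \<in> S"
    then have "s \<in> M" using S(2) ideal_gen_sub by blast
    then show "b * s \<in> scale a (ideal_gen S)" using bM S(2) by simp
  qed
qed

definition colonP :: "'a::comm_ring_1 \<Rightarrow> 'a set \<Rightarrow> 'a set" where
  "colonP a P = {x. \<forall>p\<in>P. x * p \<in> principal_ideal a}"

lemma colonP_ideal: "is_ideal (colonP a P)"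
  unfolding colonP_def using colon_ideal[OF principal_ideal_ideal] by blast

lemma colonP_a: "a \<in> colonP a P"
  unfolding colonP_def using principal_mem by blast

lemma ideal_mult_colonP: "ideal_mult P (colonP a P) \<subseteq> principal_ideal a"
  by (rule ideal_mult_least[OF principal_ideal_ideal]) (auto simp: colonP_def mult.commute)

lemma step3:
  fixes P :: "'a::idom set"
  assumes ded: "dedekind_domain TYPE('a)" and P: "maximal_ideal P" and aP: "a \<in> P" and a0: "a \<noteq> 0"
  shows "ideal_mult P (colonP a P) = principal_ideal a"
proof -
  have noeth: "noetherian_ring TYPE('a)" and IC: "integrally_closed TYPE('a)" and dim: "dim_le_one TYPE('a)"
    using ded unfolding dedekind_domain_def by auto
  have Pi: "is_ideal P" "P \<noteq> UNIV" using P unfolding maximal_ideal_def by auto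
  define T where "T = {z. a * z \<in> ideal_mult P (colonP a P)}"
  have Ti: "is_ideal T" unfolding is_ideal_def T_def
    using ideal_zero[OF ideal_mult_ideal] ideal_add[OF ideal_mult_ideal] ideal_mul[OF ideal_mult_ideal]
    by (auto simp: distrib_left mult.left_commute)
  have PT: "P \<subseteq> T"
  proof
    fix p assume "p \<in> P"
    then have "p * a \<in> ideal_mult P (colonP a P)" using colonP_a by (rule ideal_mult_in)
    then show "p \<in> T" unfolding T_def by (simp add: mult.commute)
  qed
  have "T = UNIV"
  proof (rule ccontr)
    assume "T \<noteq> UNIV"
    then have TP: "T = P" using maximal_eq[OF P Ti PT] by simp
    obtain b where b: "b \<notin> principal_ideal a" "\<And>p. p \<in> P \<Longrightarrow> b * p \<in> principal_ideal a"
      using step2[OF noeth dim P aP a0] by blast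
    have bc: "b \<in> colonP a P" unfolding colonP_def using b(2) by blast
    have "b \<in> principal_ideal a"
    proof (rule int_lemma_ideal[OF noeth IC Pi(1) _ a0])
      show "P \<noteq> {0}" using aP a0 by blast
      fix m assume m: "m \<in> P"
      have "m * b \<in> ideal_mult P (colonP a P)" using m bc by (rule ideal_mult_in)
      moreover then obtain z where z: "m * b = a * z"
        using ideal_mult_colonP by (blast elim: principal_memE)
      ultimately have "z \<in> T" unfolding T_def by simp
      then show "b * m \<in> scale a P" using z TP scale_mem by (metis mult.commute)
    qed
    then show False using b(1) by blast
  qed
  then have "a * 1 \<in> ideal_mult P (colonP a P)" unfolding T_def by blast
  then have "principal_ideal a \<subseteq> ideal_mult P (colonP a P)"
    using ideal_mul2[OF ideal_mult_ideal] by (auto elim!: principal_memE)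
  then show ?thesis using ideal_mult_colonP by blast
qed

lemma exists_maximal:
  fixes M :: "'a::comm_ring_1 set"
  assumes noeth: "noetherian_ring TYPE('a)" and M: "is_ideal M" "M \<noteq> UNIV"
  shows "\<exists>P. maximal_ideal P \<and> M \<subseteq> P"
proof -
  define \<Phi> :: "'a set set" where "\<Phi> = {J. is_ideal J \<and> M \<subseteq> J \<and> J \<noteq> UNIV}"
  have "M \<in> \<Phi>" using M unfolding \<Phi>_def by simp
  moreover have "\<And>J. J \<in> \<Phi> \<Longrightarrow> is_ideal J" unfolding \<Phi>_def by simp
  ultimately obtain P where P\<Phi>: "P \<in> \<Phi>" and Pmax: "\<forall>J\<in>\<Phi>. P \<subseteq> J \<longrightarrow> J = P"
    using noeth_max[OF noeth] by metis
  have "maximal_ideal P" unfolding maximal_ideal_def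
  proof (intro conjI allI impI)
    show "is_ideal P" "P \<noteq> UNIV" using P\<Phi> unfolding \<Phi>_def by auto
    fix J assume J: "is_ideal J \<and> P \<subseteq> J"
    show "J = P \<or> J = UNIV"
    proof (cases "J = UNIV")
      case False
      then have "J \<in> \<Phi>" using J P\<Phi> unfolding \<Phi>_def by auto
      then show ?thesis using Pmax J by blast
    qed simp
  qed
  then show ?thesis using P\<Phi> unfolding \<Phi>_def by blast
qed

theorem dedekind_invertible:
  fixes I :: "'a::idom set"
  assumes ded: "dedekind_domain TYPE('a)" and I: "is_ideal I" "I \<noteq> {0}"
  shows "invertible_ideal I"
proof (rule ccontr)
  assume nI: "\<not> ?thesis"
  have noeth: "noetherian_ring TYPE('a)" and IC: "integrally_closed TYPE('a)" and dim: "dim_le_one TYPE('a)"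
    using ded unfolding dedekind_domain_def by auto
  define \<Phi> :: "'a set set" where "\<Phi> = {I. is_ideal I \<and> I \<noteq> {0} \<and> \<not> invertible_ideal I}"
  have "I \<in> \<Phi>" using I nI unfolding \<Phi>_def by simp
  moreover have "\<And>J. J \<in> \<Phi> \<Longrightarrow> is_ideal J" unfolding \<Phi>_def by simp
  ultimately obtain M where M\<Phi>: "M \<in> \<Phi>" and Mmax: "\<forall>J\<in>\<Phi>. M \<subseteq> J \<longrightarrow> J = M"
    using noeth_max[OF noeth] by metis
  have M: "is_ideal M" "M \<noteq> {0}" "\<not> invertible_ideal M" using M\<Phi> unfolding \<Phi>_def by auto
  have "M \<noteq> UNIV" using M(3) invertible_UNIV by blast
  then obtain P where P: "maximal_ideal P" "M \<subseteq> P" using exists_maximal[OF noeth M(1)] by blast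
  have Pi: "is_ideal P" using P unfolding maximal_ideal_def by auto
  obtain a where a: "a \<in> M" "a \<noteq> 0" using M(2) ideal_zero[OF M(1)] by blast
  have aP: "a \<in> P" using a P by blast
  define J where "J = colonP a P"
  have PJ: "ideal_mult P J = principal_ideal a" unfolding J_def by (rule step3[OF ded P(1) aP a(2)])
  have MJ: "ideal_mult M J \<subseteq> principal_ideal a" using PJ ideal_mult_mono[OF P(2) order.refl] by blast
  define I' where "I' = {z. a * z \<in> ideal_mult M J}"
  have I'i: "is_ideal I'" unfolding is_ideal_def I'_def
    using ideal_zero[OF ideal_mult_ideal] ideal_add[OF ideal_mult_ideal] ideal_mul[OF ideal_mult_ideal]
    by (auto simp: distrib_left mult.left_commute)
  have MI': "M \<subseteq> I'"
  proof
    fix m assume "m \<in> M"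
    then have "m * a \<in> ideal_mult M J" using colonP_a unfolding J_def by (rule ideal_mult_in)
    then show "m \<in> I'" unfolding I'_def by (simp add: mult.commute)
  qed
  have scI': "scale a I' = ideal_mult M J"
  proof
    show "scale a I' \<subseteq> ideal_mult M J" unfolding I'_def by (auto elim!: scale_memE)
    show "ideal_mult M J \<subseteq> scale a I'"
    proof
      fix y assume y: "y \<in> ideal_mult M J"
      then obtain z where z: "y = a * z" using MJ by (blast elim: principal_memE)
      then have "z \<in> I'" using y unfolding I'_def by simp
      then show "y \<in> scale a I'" using z scale_mem by metis
    qed
  qed
  have "I' \<noteq> M"
  proof
    assume I'M: "I' = M"
    obtain b where b: "b \<notin> principal_ideal a" "\<And>p. p \<in> P \<Longrightarrow> b * p \<in> principal_ideal a"
      using step2[OF noeth dim P(1) aP a(2)] by blast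
    have bc: "b \<in> J" unfolding J_def colonP_def using b(2) by blast
    have "b \<in> principal_ideal a"
    proof (rule int_lemma_ideal[OF noeth IC M(1) M(2) a(2)])
      fix m assume m: "m \<in> M"
      have "m * b \<in> ideal_mult M J" using m bc by (rule ideal_mult_in)
      then have "m * b \<in> scale a M" using scI' I'M by simp
      then show "b * m \<in> scale a M" by (simp add: mult.commute)
    qed
    then show False using b(1) by blast
  qed
  have "I' \<notin> \<Phi>" using Mmax MI' \<open>I' \<noteq> M\<close> by blast
  moreover have "I' \<noteq> {0}" using MI' M(2) ideal_zero[OF M(1)] by blast
  ultimately have "invertible_ideal I'" using I'i unfolding \<Phi>_def by blast
  then obtain K c where K: "is_ideal K" "c \<noteq> 0" "ideal_mult I' K = principal_ideal c"
    unfolding invertible_ideal_def by blast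
  have "ideal_mult M (ideal_mult J K) = ideal_mult (ideal_mult M J) K" by (rule ideal_mult_assoc[symmetric])
  also have "\<dots> = ideal_mult (scale a I') K" unfolding scI' ..
  also have "\<dots> = scale a (ideal_mult I' K)" by (rule ideal_mult_scale[OF I'i K(1)])
  also have "\<dots> = principal_ideal (a * c)" unfolding K(3) by (rule scale_principal)
  finally have "invertible_ideal M" unfolding invertible_ideal_def
    using ideal_mult_ideal a(2) K(2) by (metis mult_eq_0_iff)
  then show False using M(3) by blast
qed

lemma set_lt_eq: "I \<subseteq> {..<n} \<Longrightarrow> {i. i < n \<and> i \<in> I} = I"
  by auto

lemma sub_carrier:
  assumes G: "G \<in> carrier_mat n n" and I: "I \<subseteq> {..<n}" "card I = k" and J: "J \<subseteq> {..<n}" "card J = k"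
  shows "submatrix G I J \<in> carrier_mat k k"
  using G I J unfolding carrier_mat_def by (simp add: dim_submatrix set_lt_eq)

lemma sub_index:
  assumes G: "G \<in> carrier_mat n n" and I: "I \<subseteq> {..<n}" "card I = k" and J: "J \<subseteq> {..<n}" "card J = k"
    and ij: "i < k" "j < k"
  shows "submatrix G I J $$ (i, j) = G $$ (pick I i, pick J j)"
  using G I J ij by (intro submatrix_index) (simp_all add: set_lt_eq)

lemma pick_char:
  assumes "x \<in> S" "card {a\<in>S. a < x} = n" shows "pick S n = x"
  using pick_card_in_set[OF assms(1)] assms(2) by simp

lemma pick_remove:
  assumes fin: "finite J" and j: "j < card J" and j': "j' < card J - 1"
  shows "pick (J - {pick J j}) j' = pick J (if j' < j then j' else Suc j')"
proof -
  define t where "t = (if j' < j then j' else Suc j')"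
  define p where "p = pick J j"
  have t: "t < card J" "t \<noteq> j" using j j' unfolding t_def by auto
  define x where "x = pick J t"
  have xJ: "x \<in> J" unfolding x_def using pick_in_set_le[OF t(1)] .
  have xp: "x \<noteq> p" unfolding x_def p_def using t pick_mono_le[OF t(1), of j] pick_mono_le[OF j, of t]
    by (cases "t < j") auto
  have pJ: "p \<in> J" unfolding p_def using pick_in_set_le[OF j] .
  have cx: "card {a\<in>J. a < x} = t" unfolding x_def using card_pick_le[OF t(1)] .
  have px: "p < x \<longleftrightarrow> j < t" unfolding x_def p_def
    using pick_mono_le[OF t(1), of j] pick_mono_le[OF j, of t] t(2) by (cases "t < j") auto
  have "{a\<in>J - {p}. a < x} = {a\<in>J. a < x} - {p}" by auto
  then have "card {a\<in>J - {p}. a < x} = card {a\<in>J. a < x} - (if p < x then 1 else 0)"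
    using fin pJ by (simp add: card_Diff_singleton_if)
  also have "\<dots> = j'" unfolding cx px t_def by auto
  finally have "pick (J - {p}) j' = x" using xJ xp by (intro pick_char) auto
  then show ?thesis unfolding x_def t_def p_def .
qed

lemma det_ideal_ideal: "is_ideal (det_ideal G k)"
  unfolding det_ideal_def by (rule ideal_gen_ideal)

lemma det_ideal_gen:
  assumes "G \<in> carrier_mat n n" "I \<subseteq> {..<n}" "J \<subseteq> {..<n}" "card I = k" "card J = k"
  shows "det (submatrix G I J) \<in> det_ideal G k"
proof -
  have "det (submatrix G I J) \<in> {det (submatrix G I J) | I J.
      I \<subseteq> {..<dim_row G} \<and> J \<subseteq> {..<dim_col G} \<and> card I = k \<and> card J = k}"
    using assms by (intro CollectI exI[of _ I] exI[of _ J]) auto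
  then show ?thesis unfolding det_ideal_def by (rule subsetD[OF ideal_gen_sub])
qed

lemma det_ideal_least:
  assumes G: "G \<in> carrier_mat n n" and K: "is_ideal K"
    and gens: "\<And>I J. I \<subseteq> {..<n} \<Longrightarrow> J \<subseteq> {..<n} \<Longrightarrow> card I = k \<Longrightarrow> card J = k \<Longrightarrow> det (submatrix G I J) \<in> K"
  shows "det_ideal G k \<subseteq> K"
  unfolding det_ideal_def
proof (rule ideal_gen_least[OF K], rule subsetI)
  fix x assume "x \<in> {det (submatrix G I J) | I J.
      I \<subseteq> {..<dim_row G} \<and> J \<subseteq> {..<dim_col G} \<and> card I = k \<and> card J = k}"
  then obtain I J where "I \<subseteq> {..<n}" "J \<subseteq> {..<n}" "card I = k" "card J = k" "x = det (submatrix G I J)"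
    using G by auto
  then show "x \<in> K" using gens by simp
qed

lemma det_ideal_mono:
  fixes G :: "'a::comm_ring_1 mat"
  assumes G: "G \<in> carrier_mat n n"
  shows "det_ideal G (Suc k) \<subseteq> det_ideal G k"
proof (rule det_ideal_least[OF G det_ideal_ideal])
  fix I J assume I: "I \<subseteq> {..<n}" "card I = Suc k" and J: "J \<subseteq> {..<n}" "card J = Suc k"
  have finI: "finite I" and finJ: "finite J" using I(1) J(1) finite_subset by auto
  define A where "A = submatrix G I J"
  have A: "A \<in> carrier_mat (Suc k) (Suc k)" unfolding A_def using sub_carrier[OF G I(1) I(2) J(1) J(2)] .
  have "det A = (\<Sum>j<Suc k. A $$ (k, j) * cofactor A k j)"
    by (rule laplace_expansion_row[OF A]) simp
  also have "\<dots> \<in> det_ideal G k"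
  proof (rule ideal_sum[OF det_ideal_ideal])
    show "finite {..<Suc k}" by simp
    fix j assume "j \<in> {..<Suc k}"
    then have j: "j < Suc k" by simp
    define I' where "I' = I - {pick I k}"
    define J' where "J' = J - {pick J j}"
    have pI: "pick I k \<in> I" using pick_in_set_le[of k I] I(2) by simp
    have pJ: "pick J j \<in> J" using pick_in_set_le[of j J] J(2) j by simp
    have I': "I' \<subseteq> {..<n}" "card I' = k" unfolding I'_def using I pI finI by auto
    have J': "J' \<subseteq> {..<n}" "card J' = k" unfolding J'_def using J pJ finJ by auto
    have "mat_delete A k j = submatrix G I' J'"
    proof (rule eq_matI)
      show "dim_row (mat_delete A k j) = dim_row (submatrix G I' J')"
        using A sub_carrier[OF G I' J'] by simp
      show "dim_col (mat_delete A k j) = dim_col (submatrix G I' J')"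
        using A sub_carrier[OF G I' J'] by simp
      fix i' j' assume ij: "i' < dim_row (submatrix G I' J')" "j' < dim_col (submatrix G I' J')"
      then have i': "i' < k" and j': "j' < k" using sub_carrier[OF G I' J'] by auto
      have "mat_delete A k j $$ (i', j') = A $$ (i', if j' < j then j' else Suc j')"
        unfolding mat_delete_def using A i' j' by simp
      also have "\<dots> = G $$ (pick I i', pick J (if j' < j then j' else Suc j'))"
        unfolding A_def using i' j' by (intro sub_index[OF G I J]) auto
      also have "\<dots> = G $$ (pick I' i', pick J' j')"
        unfolding I'_def J'_def using pick_remove[OF finI, of k i'] pick_remove[OF finJ, of j j'] I(2) J(2) i' j' j
        by simp
      also have "\<dots> = submatrix G I' J' $$ (i', j')" using i' j' by (rule sub_index[OF G I' J', symmetric])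
      finally show "mat_delete A k j $$ (i', j') = submatrix G I' J' $$ (i', j')" .
    qed
    then have "det (mat_delete A k j) \<in> det_ideal G k" using det_ideal_gen[OF G I'(1) J'(1) I'(2) J'(2)] by simp
    then show "A $$ (k, j) * cofactor A k j \<in> det_ideal G k" unfolding cofactor_def
      by (intro ideal_mul[OF det_ideal_ideal] ideal_mul2[OF det_ideal_ideal])
  qed
  finally show "det (submatrix G I J) \<in> det_ideal G k" unfolding A_def .
qed

lemma det_ideal_mono_le:
  fixes G :: "'a::comm_ring_1 mat"
  assumes G: "G \<in> carrier_mat n n" and "k \<le> m"
  shows "det_ideal G m \<subseteq> det_ideal G k"
  using assms(2)
proof (induction m)
  case 0 then show ?case by simp
next
  case (Suc m)
  then show ?case
  proof (cases "k = Suc m")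
    case False
    then have "k \<le> m" using Suc.prems by simp
    then show ?thesis using Suc.IH det_ideal_mono[OF G, of m] by blast
  qed simp
qed

lemma det_ideal_0:
  fixes G :: "'a::comm_ring_1 mat"
  assumes G: "G \<in> carrier_mat n n"
  shows "det_ideal G 0 = UNIV"
proof -
  have "submatrix G {} {} \<in> carrier_mat 0 0" using sub_carrier[OF G, of "{}" 0 "{}"] by simp
  then have "det (submatrix G {} {}) = 1" by (simp add: det_def)
  then have "1 \<in> det_ideal G 0" using det_ideal_gen[OF G, of "{}" "{}" 0] by simp
  then show ?thesis using ideal_mul2[OF det_ideal_ideal, of 1 G 0] by auto
qed

lemma det_ideal_n:
  fixes G :: "'a::comm_ring_1 mat"
  assumes G: "G \<in> carrier_mat n n"
  shows "det G \<in> det_ideal G n"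
proof -
  have "submatrix G {..<n} {..<n} = G"
  proof (rule eq_matI)
    show "dim_row (submatrix G {..<n} {..<n}) = dim_row G" "dim_col (submatrix G {..<n} {..<n}) = dim_col G"
      using sub_carrier[OF G, of "{..<n}" n "{..<n}"] G by auto
    fix i j assume "i < dim_row G" "j < dim_col G"
    then have ij: "i < n" "j < n" using G by auto
    have pk: "pick {..<n} t = t" if "t < n" for t
    proof -
      have "{a \<in> {..<n}. a < t} = {..<t}" using that by auto
      then show ?thesis using pick_char[of t "{..<n}" t] that by simp
    qed
    show "submatrix G {..<n} {..<n} $$ (i, j) = G $$ (i, j)"
      using sub_index[OF G, of "{..<n}" n "{..<n}" i j] ij pk by simp
  qed
  then show ?thesis using det_ideal_gen[OF G, of "{..<n}" "{..<n}" n] by simp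
qed

lemma det_sq:
  fixes G :: "'a::comm_ring_1 mat"
  assumes G: "G \<in> carrier_mat n n" and GG: "G * transpose_mat G = c \<cdot>\<^sub>m 1\<^sub>m n"
  shows "det G * det G = c ^ n"
proof -
  have "det (G * transpose_mat G) = det G * det (transpose_mat G)"
    using G by (intro det_mult) auto
  also have "det (transpose_mat G) = det G" using det_transpose[OF G] .
  finally show ?thesis unfolding GG by simp
qed

lemma block_jacobi:
  fixes G :: "'a::idom mat"
  assumes G: "G \<in> carrier_mat n n" and GG: "G * transpose_mat G = c \<cdot>\<^sub>m 1\<^sub>m n" and k: "k \<le> n"
  shows "det G * det (mat k k (\<lambda>(i,j). G $$ (i,j))) * c ^ (n - k)
       = c ^ n * det (mat (n-k) (n-k) (\<lambda>(i,j). G $$ (k+i, k+j)))"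
proof -
  define A where "A = mat k k (\<lambda>(i,j). G $$ (i,j))"
  define D where "D = mat (n-k) (n-k) (\<lambda>(i,j). G $$ (k+i, k+j))"
  define M where "M = mat n n (\<lambda>(r,s). if s < k then G $$ (s,r) else (if r = s then c else 0))"
  have M: "M \<in> carrier_mat n n" unfolding M_def by simp
  have GGe: "(\<Sum>r\<in>{0..<n}. G $$ (i,r) * G $$ (s,r)) = (if i = s then c else 0)" if "i < n" "s < n" for i s
  proof -
    have "(G * transpose_mat G) $$ (i,s) = (\<Sum>r\<in>{0..<n}. G $$ (i,r) * G $$ (s,r))"
      using G that by (simp add: scalar_prod_def)
    then show ?thesis using GG that by (cases "i = s") simp_all
  qed
  define P where "P = mat n n (\<lambda>(i,s). if s < k then (if i = s then c else 0) else c * G $$ (i,s))"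
  have GM: "G * M = P"
  proof (rule eq_matI)
    show "dim_row (G * M) = dim_row P" "dim_col (G * M) = dim_col P" using G M unfolding P_def by auto
    fix i s assume "i < dim_row P" "s < dim_col P"
    then have iis: "i < n" "s < n" unfolding P_def by auto
    have "(G * M) $$ (i,s) = (\<Sum>r\<in>{0..<n}. G $$ (i,r) * M $$ (r,s))"
      using G M iis by (simp add: scalar_prod_def)
    also have "\<dots> = P $$ (i,s)"
    proof (cases "s < k")
      case True
      then have "(\<Sum>r\<in>{0..<n}. G $$ (i,r) * M $$ (r,s)) = (\<Sum>r\<in>{0..<n}. G $$ (i,r) * G $$ (s,r))"
        unfolding M_def using iis by (intro sum.cong) auto
      then show ?thesis using GGe[OF iis] True iis unfolding P_def by simp
    next
      case False
      then have "(\<Sum>r\<in>{0..<n}. G $$ (i,r) * M $$ (r,s)) = (\<Sum>r\<in>{0..<n}. if r = s then G $$ (i,r) * c else 0)"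
        unfolding M_def using iis by (intro sum.cong) auto
      also have "\<dots> = G $$ (i,s) * c" using iis by simp
      finally show ?thesis using False iis unfolding P_def by (simp add: mult.commute)
    qed
    finally show "(G * M) $$ (i,s) = P $$ (i,s)" .
  qed
  have P4: "P = four_block_mat (c \<cdot>\<^sub>m 1\<^sub>m k) (mat k (n-k) (\<lambda>(i,j). c * G $$ (i, k+j))) (0\<^sub>m (n-k) k) (c \<cdot>\<^sub>m D)"
    by (rule eq_matI) (use k in \<open>auto simp: P_def D_def\<close>)
  have detP: "det P = c ^ k * (c ^ (n-k) * det D)"
    unfolding P4 by (subst det_four_block_mat_lower_left_zero[of _ k _ "n-k"]) (auto simp: D_def)
  define B where "B = mat (n-k) k (\<lambda>(i,j). G $$ (j, k+i))"
  have M4: "M = four_block_mat (transpose_mat A) (0\<^sub>m k (n-k)) B (c \<cdot>\<^sub>m 1\<^sub>m (n-k))"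
    by (rule eq_matI) (use k in \<open>auto simp: M_def A_def B_def\<close>)
  have Acar: "A \<in> carrier_mat k k" and Bcar: "B \<in> carrier_mat (n-k) k" unfolding A_def B_def by auto
  have dAT: "det (transpose_mat A) = det A" by (rule det_transpose[of _ k]) (simp add: A_def)
  have detM: "det M = det A * c ^ (n-k)"
    unfolding M4 by (subst det_four_block_mat_upper_right_zero[of _ k _ "n-k"])
      (use Acar Bcar in \<open>auto simp: dAT\<close>)
  have "det G * det M = det P" unfolding GM[symmetric] by (rule det_mult[OF G M, symmetric])
  then have "det G * det A * c ^ (n-k) = c ^ k * c ^ (n-k) * det D" unfolding detM detP by (simp add: ac_simps)
  also have "c ^ k * c ^ (n-k) = c ^ n" using k by (simp add: power_add[symmetric])
  finally show ?thesis unfolding A_def D_def .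
qed

lemma pick_inj: assumes "i < card S" "j < card S" "pick S i = pick S j" shows "i = j"
proof (rule ccontr)
  assume "i \<noteq> j"
  then consider "i < j" | "j < i" by linarith
  then show False
  proof cases
    case 1 then show False using pick_mono_le[OF assms(2) 1] assms(3) by simp
  next
    case 2 then show False using pick_mono_le[OF assms(1) 2] assms(3) by simp
  qed
qed

definition perm_of :: "nat \<Rightarrow> nat \<Rightarrow> nat set \<Rightarrow> nat \<Rightarrow> nat" where
  "perm_of n k I i = (if i < k then pick I i else pick ({..<n} - I) (i - k))"

lemma perm_of_props:
  assumes I: "I \<subseteq> {..<n}" "card I = k"
  shows "bij_betw (perm_of n k I) {..<n} {..<n}" "card ({..<n} - I) = n - k"
proof -
  have fin: "finite I" using I(1) finite_subset by auto
  show cIc: "card ({..<n} - I) = n - k" using I by (simp add: card_Diff_subset fin)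
  have kn: "k \<le> n" using I card_mono[of "{..<n}" I] by simp
  have inI: "perm_of n k I i \<in> I" if "i < k" for i
    unfolding perm_of_def using that pick_in_set_le[of i I] I(2) by simp
  have inIc: "perm_of n k I i \<in> {..<n} - I" if "k \<le> i" "i < n" for i
    unfolding perm_of_def using that pick_in_set_le[of "i - k" "{..<n} - I"] cIc by simp
  have maps: "perm_of n k I ` {..<n} \<subseteq> {..<n}"
  proof
    fix y assume "y \<in> perm_of n k I ` {..<n}"
    then obtain i where i: "i < n" "y = perm_of n k I i" by auto
    show "y \<in> {..<n}"
    proof (cases "i < k")
      case True then show ?thesis using inI[OF True] I(1) i(2) by blast
    next
      case False then show ?thesis using inIc[of i] i by auto
    qed
  qed
  have inj: "inj_on (perm_of n k I) {..<n}"
  proof (rule inj_onI)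
    fix i j assume i: "i \<in> {..<n}" and j: "j \<in> {..<n}" and eq: "perm_of n k I i = perm_of n k I j"
    show "i = j"
    proof (cases "i < k"; cases "j < k")
      assume "i < k" "j < k"
      then show ?thesis using eq pick_inj[of i I j] I(2) unfolding perm_of_def by simp
    next
      assume a: "i < k" "\<not> j < k"
      then show ?thesis using inI[of i] inIc[of j] j eq by auto
    next
      assume a: "\<not> i < k" "j < k"
      then show ?thesis using inI[of j] inIc[of i] i eq by auto
    next
      assume a: "\<not> i < k" "\<not> j < k"
      then have "i - k = j - k" using eq pick_inj[of "i - k" "{..<n} - I" "j - k"] cIc i j unfolding perm_of_def by simp
      then show ?thesis using a by simp
    qed
  qed
  have "perm_of n k I ` {..<n} = {..<n}" by (rule endo_inj_surj[OF _ maps inj]) simp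
  then show "bij_betw (perm_of n k I) {..<n} {..<n}" using inj unfolding bij_betw_def by simp
qed

lemma compl_minor:
  fixes G :: "'a::idom mat"
  assumes G: "G \<in> carrier_mat n n" and GG: "G * transpose_mat G = l^2 \<cdot>\<^sub>m 1\<^sub>m n" and l: "l \<noteq> 0"
    and I: "I \<subseteq> {..<n}" "card I = k" and J: "J \<subseteq> {..<n}" "card J = k" and k2: "2 * k \<le> n"
  shows "\<exists>e. (e = 1 \<or> e = -1) \<and>
    det (submatrix G ({..<n} - I) ({..<n} - J)) = e * l ^ (n - 2*k) * det (submatrix G I J)"
proof -
  define pr where "pr = perm_of n k I"
  define pc where "pc = perm_of n k J"
  have bpr: "bij_betw pr {..<n} {..<n}" and cI: "card ({..<n} - I) = n - k"
    unfolding pr_def using perm_of_props[OF I] by auto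
  have bpc: "bij_betw pc {..<n} {..<n}" and cJ: "card ({..<n} - J) = n - k"
    unfolding pc_def using perm_of_props[OF J] by auto
  have kn: "k \<le> n" using k2 by simp
  define H where "H = mat n n (\<lambda>(i,j). G $$ (pr i, pc j))"
  have H: "H \<in> carrier_mat n n" unfolding H_def by simp
  have prn: "pr i < n" if "i < n" for i using bpr that unfolding bij_betw_def by auto
  have HH: "H * transpose_mat H = l^2 \<cdot>\<^sub>m 1\<^sub>m n"
  proof (rule eq_matI)
    show "dim_row (H * transpose_mat H) = dim_row (l^2 \<cdot>\<^sub>m 1\<^sub>m n)"
      "dim_col (H * transpose_mat H) = dim_col (l^2 \<cdot>\<^sub>m 1\<^sub>m n)" using H by auto
    fix i i' assume "i < dim_row (l^2 \<cdot>\<^sub>m 1\<^sub>m n)" "i' < dim_col (l^2 \<cdot>\<^sub>m 1\<^sub>m n)"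
    then have ii: "i < n" "i' < n" by auto
    have "(H * transpose_mat H) $$ (i,i') = (\<Sum>j\<in>{0..<n}. G $$ (pr i, pc j) * G $$ (pr i', pc j))"
      using H ii by (simp add: scalar_prod_def H_def)
    also have "\<dots> = (\<Sum>j\<in>{..<n}. G $$ (pr i, pc j) * G $$ (pr i', pc j))"
      by (simp add: atLeast0LessThan)
    also have "\<dots> = (\<Sum>j\<in>{..<n}. G $$ (pr i, j) * G $$ (pr i', j))"
      by (rule sum.reindex_bij_betw[OF bpc, of "\<lambda>j. G $$ (pr i, j) * G $$ (pr i', j)"])
    also have "\<dots> = (G * transpose_mat G) $$ (pr i, pr i')"
      using G ii prn by (simp add: scalar_prod_def atLeast0LessThan)
    also have "\<dots> = (if pr i = pr i' then l^2 else 0)" unfolding GG using ii prn by simp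
    also have "\<dots> = (if i = i' then l^2 else 0)"
      using bpr ii unfolding bij_betw_def inj_on_def by auto
    also have "\<dots> = (l^2 \<cdot>\<^sub>m 1\<^sub>m n) $$ (i,i')" using ii by simp
    finally show "(H * transpose_mat H) $$ (i,i') = (l^2 \<cdot>\<^sub>m 1\<^sub>m n) $$ (i,i')" .
  qed
  have "det H * det H = (l^2)^n" by (rule det_sq[OF H HH])
  also have "\<dots> = l^n * l^n" by (simp add: power_mult_distrib[symmetric] power2_eq_square power_mult[symmetric] mult.commute)
  finally have "det H = l^n \<or> det H = - (l^n)" using square_eq_iff by blast
  then obtain e :: 'a where e: "e = 1 \<or> e = -1" "det H = e * l^n" by (metis mult_minus_left mult_1)
  have A: "mat k k (\<lambda>(i,j). H $$ (i,j)) = submatrix G I J"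
  proof (rule eq_matI)
    show "dim_row (mat k k (\<lambda>(i,j). H $$ (i,j))) = dim_row (submatrix G I J)"
      "dim_col (mat k k (\<lambda>(i,j). H $$ (i,j))) = dim_col (submatrix G I J)"
      using sub_carrier[OF G I J] by auto
    fix i j assume "i < dim_row (submatrix G I J)" "j < dim_col (submatrix G I J)"
    then have ij: "i < k" "j < k" using sub_carrier[OF G I J] by auto
    then show "mat k k (\<lambda>(i,j). H $$ (i,j)) $$ (i,j) = submatrix G I J $$ (i,j)"
      using kn sub_index[OF G I J ij] unfolding H_def pr_def pc_def perm_of_def by simp
  qed
  have Ic: "{..<n} - I \<subseteq> {..<n}" and Jc: "{..<n} - J \<subseteq> {..<n}" by auto
  have D: "mat (n-k) (n-k) (\<lambda>(i,j). H $$ (k+i, k+j)) = submatrix G ({..<n} - I) ({..<n} - J)"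
  proof (rule eq_matI)
    show "dim_row (mat (n-k) (n-k) (\<lambda>(i,j). H $$ (k+i, k+j))) = dim_row (submatrix G ({..<n} - I) ({..<n} - J))"
      "dim_col (mat (n-k) (n-k) (\<lambda>(i,j). H $$ (k+i, k+j))) = dim_col (submatrix G ({..<n} - I) ({..<n} - J))"
      using sub_carrier[OF G Ic cI Jc cJ] by auto
    fix i j assume "i < dim_row (submatrix G ({..<n} - I) ({..<n} - J))"
      "j < dim_col (submatrix G ({..<n} - I) ({..<n} - J))"
    then have ij: "i < n - k" "j < n - k" using sub_carrier[OF G Ic cI Jc cJ] by auto
    then show "mat (n-k) (n-k) (\<lambda>(i,j). H $$ (k+i, k+j)) $$ (i,j) = submatrix G ({..<n} - I) ({..<n} - J) $$ (i,j)"
      using kn sub_index[OF G Ic cI Jc cJ ij] unfolding H_def pr_def pc_def perm_of_def by simp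
  qed
  have BJ: "det H * det (submatrix G I J) * (l^2) ^ (n - k) = (l^2) ^ n * det (submatrix G ({..<n} - I) ({..<n} - J))"
    using block_jacobi[OF H HH kn] unfolding A D .
  obtain q where q: "n = 2 * k + q" using k2 le_Suc_ex by blast
  define a where "a = det (submatrix G I J)"
  define d where "d = det (submatrix G ({..<n} - I) ({..<n} - J))"
  have "l ^ (4*k + 2*q) * d = l ^ (4*k + 2*q) * (e * l ^ q * a)"
  proof -
    have "l ^ (4*k + 2*q) * d = (l^2) ^ n * d" unfolding q by (simp add: power_mult[symmetric] algebra_simps)
    also have "\<dots> = e * l^n * a * (l^2) ^ (n - k)" using BJ e(2) unfolding a_def d_def by simp
    also have "\<dots> = l ^ (4*k + 2*q) * (e * l ^ q * a)"
      unfolding q by (simp add: power_mult[symmetric] power_add[symmetric] algebra_simps)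
    finally show ?thesis .
  qed
  then have "d = e * l ^ q * a" using l by simp
  then show ?thesis using e(1) q unfolding a_def d_def by auto
qed

lemma ideal_gen_scale:
  fixes c :: "'a::comm_ring_1"
  assumes TS: "\<And>y. y \<in> T \<Longrightarrow> \<exists>x\<in>S. y = c * x \<or> y = - (c * x)"
    and ST: "\<And>x. x \<in> S \<Longrightarrow> \<exists>y\<in>T. c * x = y \<or> c * x = - y"
  shows "ideal_gen T = scale c (ideal_gen S)"
proof
  show "ideal_gen T \<subseteq> scale c (ideal_gen S)"
  proof (rule ideal_gen_least[OF scale_ideal[OF ideal_gen_ideal]], rule subsetI)
    fix y assume "y \<in> T"
    then obtain x where x: "x \<in> S" "y = c * x \<or> y = - (c * x)" using TS by blast
    have xs: "x \<in> ideal_gen S" using x(1) ideal_gen_sub by blast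
    have "-x \<in> ideal_gen S" using ideal_uminus[OF ideal_gen_ideal xs] .
    then show "y \<in> scale c (ideal_gen S)" using x(2) scale_mem[OF xs, of c] scale_mem[of "-x" "ideal_gen S" c]
      by auto
  qed
  show "scale c (ideal_gen S) \<subseteq> ideal_gen T"
  proof
    fix z assume "z \<in> scale c (ideal_gen S)"
    then obtain x where x: "x \<in> ideal_gen S" "z = c * x" by (auto elim!: scale_memE)
    have "ideal_gen S \<subseteq> {x. c * x \<in> ideal_gen T}"
    proof (rule ideal_gen_least)
      show "is_ideal {x. c * x \<in> ideal_gen T}" unfolding is_ideal_def
        using ideal_zero[OF ideal_gen_ideal] ideal_add[OF ideal_gen_ideal] ideal_mul[OF ideal_gen_ideal]
        by (auto simp: distrib_left mult.left_commute)
      show "S \<subseteq> {x. c * x \<in> ideal_gen T}"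
      proof
        fix x assume "x \<in> S"
        then obtain y where y: "y \<in> T" "c * x = y \<or> c * x = - y" using ST by blast
        have "y \<in> ideal_gen T" using y(1) ideal_gen_sub by blast
        then show "x \<in> {x. c * x \<in> ideal_gen T}" using y(2) ideal_uminus[OF ideal_gen_ideal] by auto
      qed
    qed
    then show "z \<in> ideal_gen T" using x by blast
  qed
qed

lemma det_ideal_compl:
  fixes G :: "'a::idom mat"
  assumes G: "G \<in> carrier_mat n n" and GG: "G * transpose_mat G = l^2 \<cdot>\<^sub>m 1\<^sub>m n" and l: "l \<noteq> 0"
    and k2: "2 * k \<le> n"
  shows "det_ideal G (n - k) = scale (l ^ (n - 2*k)) (det_ideal G k)"
  unfolding det_ideal_def
proof (rule ideal_gen_scale)
  have dims: "dim_row G = n" "dim_col G = n" using G by auto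
  fix y assume "y \<in> {det (submatrix G I J) | I J. I \<subseteq> {..<dim_row G} \<and> J \<subseteq> {..<dim_col G} \<and> card I = n - k \<and> card J = n - k}"
  then obtain I' J' where I': "I' \<subseteq> {..<n}" "card I' = n - k" and J': "J' \<subseteq> {..<n}" "card J' = n - k"
    and y: "y = det (submatrix G I' J')" unfolding dims by blast
  define I where "I = {..<n} - I'"
  define J where "J = {..<n} - J'"
  have fI': "finite I'" "finite J'" using I'(1) J'(1) finite_subset by auto
  have I: "I \<subseteq> {..<n}" "card I = k" unfolding I_def using I' fI' k2 by (auto simp: card_Diff_subset)
  have J: "J \<subseteq> {..<n}" "card J = k" unfolding J_def using J' fI' k2 by (auto simp: card_Diff_subset)
  have II: "{..<n} - I = I'" "{..<n} - J = J'" unfolding I_def J_def using I'(1) J'(1) by auto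
  obtain e :: 'a where e: "e = 1 \<or> e = -1" "y = e * l ^ (n - 2*k) * det (submatrix G I J)"
    using compl_minor[OF G GG l I J k2] unfolding II y by blast
  have "det (submatrix G I J) \<in> {det (submatrix G I J) | I J. I \<subseteq> {..<dim_row G} \<and> J \<subseteq> {..<dim_col G} \<and> card I = k \<and> card J = k}"
    unfolding dims using I J by (intro CollectI exI[of _ I] exI[of _ J]) auto
  moreover have "y = l ^ (n - 2*k) * det (submatrix G I J) \<or> y = - (l ^ (n - 2*k) * det (submatrix G I J))"
    using e by auto
  ultimately show "\<exists>x\<in>{det (submatrix G I J) | I J. I \<subseteq> {..<dim_row G} \<and> J \<subseteq> {..<dim_col G} \<and> card I = k \<and> card J = k}.
      y = l ^ (n - 2*k) * x \<or> y = - (l ^ (n - 2*k) * x)" by blast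
next
  have dims: "dim_row G = n" "dim_col G = n" using G by auto
  fix x assume "x \<in> {det (submatrix G I J) | I J. I \<subseteq> {..<dim_row G} \<and> J \<subseteq> {..<dim_col G} \<and> card I = k \<and> card J = k}"
  then obtain I J where I: "I \<subseteq> {..<n}" "card I = k" and J: "J \<subseteq> {..<n}" "card J = k"
    and x: "x = det (submatrix G I J)" unfolding dims by blast
  obtain e :: 'a where e: "e = 1 \<or> e = -1"
    "det (submatrix G ({..<n} - I) ({..<n} - J)) = e * l ^ (n - 2*k) * det (submatrix G I J)"
    using compl_minor[OF G GG l I J k2] by blast
  have cI: "card ({..<n} - I) = n - k" and cJ: "card ({..<n} - J) = n - k"
    using perm_of_props(2)[OF I] perm_of_props(2)[OF J] by auto
  have "det (submatrix G ({..<n} - I) ({..<n} - J)) \<in> {det (submatrix G I J) | I J. I \<subseteq> {..<dim_row G} \<and> J \<subseteq> {..<dim_col G} \<and> card I = n - k \<and> card J = n - k}"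
    unfolding dims using cI cJ by (intro CollectI exI[of _ "{..<n} - I"] exI[of _ "{..<n} - J"]) auto
  moreover have "l ^ (n - 2*k) * x = det (submatrix G ({..<n} - I) ({..<n} - J)) \<or>
      l ^ (n - 2*k) * x = - det (submatrix G ({..<n} - I) ({..<n} - J))"
    using e unfolding x by auto
  ultimately show "\<exists>y\<in>{det (submatrix G I J) | I J. I \<subseteq> {..<dim_row G} \<and> J \<subseteq> {..<dim_col G} \<and> card I = n - k \<and> card J = n - k}.
      l ^ (n - 2*k) * x = y \<or> l ^ (n - 2*k) * x = - y" by blast
qed

lemma smith_char:
  fixes G :: "'a::idom mat"
  assumes ded: "dedekind_domain TYPE('a)" and G: "G \<in> carrier_mat n n" and i: "1 \<le> i"
    and nz: "det_ideal G (i - 1) \<noteq> {0}"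
  shows "is_ideal (smith_ideal G i) \<and> ideal_mult (smith_ideal G i) (det_ideal G (i - 1)) = det_ideal G i"
proof -
  have inv: "invertible_ideal (det_ideal G (i - 1))"
    by (rule dedekind_invertible[OF ded det_ideal_ideal nz])
  have sub: "det_ideal G i \<subseteq> det_ideal G (i - 1)"
    using det_ideal_mono[OF G, of "i - 1"] i by simp
  obtain d where d: "is_ideal d" "ideal_mult d (det_ideal G (i - 1)) = det_ideal G i"
    using invertible_divide[OF inv det_ideal_ideal det_ideal_ideal sub] by blast
  have uniq: "e = d" if "is_ideal e \<and> ideal_mult e (det_ideal G (i - 1)) = det_ideal G i" for e
    using invertible_cancel[OF inv, of e d] that d by simp
  show ?thesis
  proof (cases "i = 1")
    case True
    have "ideal_mult (det_ideal G 1) UNIV = det_ideal G 1"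
      by (subst ideal_mult_comm) (rule ideal_mult_UNIV[OF det_ideal_ideal])
    then have "ideal_mult (det_ideal G 1) (det_ideal G 0) = det_ideal G 1" using det_ideal_0[OF G] by simp
    moreover have "smith_ideal G i = det_ideal G 1" using True by (simp add: smith_ideal_def)
    ultimately show ?thesis using True det_ideal_ideal[of G 1] by simp
  next
    case False
    then have "smith_ideal G i = (THE d. is_ideal d \<and> ideal_mult d (det_ideal G (i - 1)) = det_ideal G i)"
      unfolding smith_ideal_def using nz by simp
    also have "\<dots> = d"
    proof (rule the_equality)
      show "is_ideal d \<and> ideal_mult d (det_ideal G (i - 1)) = det_ideal G i" using d by simp
      show "\<And>e. is_ideal e \<and> ideal_mult e (det_ideal G (i - 1)) = det_ideal G i \<Longrightarrow> e = d" by (rule uniq)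
    qed
    finally show ?thesis using d by simp
  qed
qed

lemma det_ideal_nonzero:
  fixes G :: "'a::idom mat"
  assumes G: "G \<in> carrier_mat n n" and GG: "G * transpose_mat G = l^2 \<cdot>\<^sub>m 1\<^sub>m n" and l: "l \<noteq> 0"
    and k: "k \<le> n"
  shows "det_ideal G k \<noteq> {0}"
proof -
  have "det G * det G = (l^2)^n" by (rule det_sq[OF G GG])
  then have "det G \<noteq> 0" using l by auto
  moreover have "det G \<in> det_ideal G k" using det_ideal_n[OF G] det_ideal_mono_le[OF G k] by blast
  ultimately show ?thesis by blast
qed

theorem lemma2p6:
  fixes G :: "'a::idom mat" and n :: nat and l :: 'a and i :: nat
  assumes "dedekind_domain TYPE('a)"
    and "G \<in> carrier_mat n n"
    and "l \<noteq> 0"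
    and "G * transpose_mat G = l^2 \<cdot>\<^sub>m 1\<^sub>m n"
    and "1 \<le> i" and "2 * i \<le> n"
  shows "ideal_mult (smith_ideal G i) (smith_ideal G (n - i + 1)) = principal_ideal (l^2)"
proof -
  note ded = assms(1) and G = assms(2) and l = assms(3) and GG = assms(4) and i = assms(5) and i2 = assms(6)
  define A where "A = det_ideal G (i - 1)"
  define B where "B = det_ideal G i"
  define x where "x = smith_ideal G i"
  define y where "y = smith_ideal G (n - i + 1)"
  have Anz: "A \<noteq> {0}" unfolding A_def using det_ideal_nonzero[OF G GG l] i2 by simp
  have x: "is_ideal x" "ideal_mult x A = B"
    using smith_char[OF ded G i] Anz unfolding A_def B_def x_def by auto
  have ni: "n - i + 1 - 1 = n - i" by simp
  have A'nz: "det_ideal G (n - i) \<noteq> {0}" using det_ideal_nonzero[OF G GG l] by simp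
  have y: "is_ideal y" "ideal_mult y (det_ideal G (n - i)) = det_ideal G (n - i + 1)"
    using smith_char[OF ded G, of "n - i + 1"] A'nz unfolding y_def ni by auto
  have A': "det_ideal G (n - i) = scale (l ^ (n - 2*i)) B"
    unfolding B_def by (rule det_ideal_compl[OF G GG l i2])
  have B': "det_ideal G (n - (i - 1)) = scale (l ^ (n - 2*(i - 1))) A"
    unfolding A_def by (rule det_ideal_compl[OF G GG l]) (use i2 in simp)
  have e1: "n - (i - 1) = n - i + 1" using i i2 by simp
  have e2: "l ^ (n - 2*(i - 1)) = l ^ (n - 2*i) * l^2"
  proof -
    have "n - 2*(i - 1) = (n - 2*i) + 2" using i i2 by simp
    then show ?thesis by (simp only: power_add)
  qed
  have Ai: "is_ideal A" "is_ideal B" unfolding A_def B_def by (simp_all add: det_ideal_ideal)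
  have "scale (l ^ (n - 2*i)) (ideal_mult y B) = ideal_mult y (scale (l ^ (n - 2*i)) B)"
    using ideal_mult_scale[OF Ai(2) y(1)] by (simp add: ideal_mult_comm)
  also have "\<dots> = scale (l ^ (n - 2*i)) (scale (l^2) A)"
    using y(2) B' unfolding A' e1 e2 scale_scale by simp
  finally have yB: "ideal_mult y B = scale (l^2) A"
    using scale_cancel[of "l ^ (n - 2*i)"] l by simp
  have "ideal_mult (ideal_mult x y) A = ideal_mult (ideal_mult y x) A" by (simp only: ideal_mult_comm[of x y])
  also have "\<dots> = ideal_mult y (ideal_mult x A)" by (rule ideal_mult_assoc)
  also have "\<dots> = ideal_mult (principal_ideal (l^2)) A" unfolding x(2) yB ideal_mult_principal[OF Ai(1)] ..
  finally have "ideal_mult (ideal_mult x y) A = ideal_mult (principal_ideal (l^2)) A" .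
  moreover have "invertible_ideal A" by (rule dedekind_invertible[OF ded Ai(1) Anz])
  ultimately have "ideal_mult x y = principal_ideal (l^2)"
    by (intro invertible_cancel[of A "ideal_mult x y" "principal_ideal (l^2)"] ideal_mult_ideal principal_ideal_ideal)
  then show ?thesis unfolding x_def y_def .
qed

end
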